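(* Let $r\in[0,1]$, $\sigma>0$, $L_2>0$, $K_+,K_-\in\mathbb N_0$. There exist a dataset space $\mathbb X$ of finite sets, a pair of datasets $x\simeq_{K_+,K_-}x'$, and a function $h:\mathbb Y\to\mathbb R^D$ with $\max_{y\simeq_\pm y'}\|h(y)-h(y')\|_2=L_2$ such that, for $M=B\circ S$ with $S$ Poisson subsampling at rate $r$ and $B(y)=h(y)+V$, $V\sim\mathcal N(0,\sigma^2I_D)$, $$\Psi_\alpha(m_x\|m_{x'})=\Psi_\alpha\Big(\sum_{i=1}^{K_-+1}f^{(1)}_i\,\mathrm{Binom}(i-1\mid K_-,r)\ \Big\|\ \sum_{j=1}^{K_++1}f^{(2)}_j\,\mathrm{Binom}(j-1\mid K_+,r)\Big),$$ with $f^{(1)}_i$ the univariate normal density with mean $i-1$ and standard deviation $\sigma/L_2$ and $f^{(2)}_j$ the univariate normal density with mean $-(j-1)$ and standard deviation $\sigma/L_2$.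
   Context: Batches are subsets $y\subseteq x$ of datasets; Poisson subsampling with rate $r$: $s_x(y)=r^{|y|}(1-r)^{|x|-|y|}$ for $y\subseteq x$; $m_x(z)=\sum_y b_y(z)s_x(y)$ with $b_y$ the density of $B(y)$. $y\simeq_\pm y'$ iff one is obtained from the other by inserting or removing a single element. $x\simeq_{K_+,K_-}x'$ iff $x'=(x\setminus g_-)\cup g_+$ with $g_-\subseteq x$, $|g_-|=K_-$, $g_+\cap x=\emptyset$, $|g_+|=K_+$. $\mathrm{Binom}(k\mid n,r)=\binom nk r^k(1-r)^{n-k}$. $H_\alpha(p\|q)=\int\max\{p-\alpha q,0\}$ ($\alpha\ge0$), $\Lambda_\alpha(p\|q)=\int p^\alpha q^{1-\alpha}$ ($\alpha>1$); $\Psi_\alpha$ is either. *)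

theory Defs
  imports "HOL-Probability.Probability"
begin

definition insdel_neighbor :: "'e set \<Rightarrow> 'e set \<Rightarrow> bool" where
  "insdel_neighbor y y' \<longleftrightarrow> (\<exists>a. a \<notin> y \<and> y' = insert a y) \<or> (\<exists>a. a \<notin> y' \<and> y = insert a y')"

definition group_neighbor :: "nat \<Rightarrow> nat \<Rightarrow> 'e set \<Rightarrow> 'e set \<Rightarrow> bool" where
  "group_neighbor Kp Km x x' \<longleftrightarrow>
     (\<exists>gm gp. gm \<subseteq> x \<and> finite gm \<and> card gm = Km \<and> gp \<inter> x = {} \<and> finite gp \<and> card gp = Kp
             \<and> x' = (x - gm) \<union> gp)"

definition binom_prob :: "nat \<Rightarrow> nat \<Rightarrow> real \<Rightarrow> real" where
  "binom_prob k n r = real (n choose k) * r ^ k * (1 - r) ^ (n - k)"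

definition poisson_sub :: "real \<Rightarrow> 'e set \<Rightarrow> 'e set \<Rightarrow> real" where
  "poisson_sub r x y = (if y \<subseteq> x then r ^ card y * (1 - r) ^ (card x - card y) else 0)"

definition gauss_density :: "real \<Rightarrow> 'a::euclidean_space \<Rightarrow> 'a \<Rightarrow> real" where
  "gauss_density \<sigma> \<mu> z = (1 / (sqrt (2 * pi) * \<sigma>)) ^ DIM('a) * exp (- (norm (z - \<mu>))\<^sup>2 / (2 * \<sigma>\<^sup>2))"

definition subsampled_gauss_density ::
    "real \<Rightarrow> real \<Rightarrow> ('e set \<Rightarrow> 'a::euclidean_space) \<Rightarrow> 'e set \<Rightarrow> 'a \<Rightarrow> real" where
  "subsampled_gauss_density r \<sigma> h x z = (\<Sum>y\<in>Pow x. gauss_density \<sigma> (h y) z * poisson_sub r x y)"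

definition hockey_stick :: "'a measure \<Rightarrow> real \<Rightarrow> ('a \<Rightarrow> real) \<Rightarrow> ('a \<Rightarrow> real) \<Rightarrow> real" where
  "hockey_stick M \<alpha> p q = (\<integral>z. max (p z - \<alpha> * q z) 0 \<partial>M)"

definition renyi_moment :: "'a measure \<Rightarrow> real \<Rightarrow> ('a \<Rightarrow> real) \<Rightarrow> ('a \<Rightarrow> real) \<Rightarrow> real" where
  "renyi_moment M \<alpha> p q = (\<integral>z. p z powr \<alpha> * q z powr (1 - \<alpha>) \<partial>M)"

end

theory Submission imports Defs begin

lemma sum_Pow_card:
  assumes "finite S"
  shows "(\<Sum>y\<in>Pow S. g (card y)) = (\<Sum>k\<le>card S. real (card S choose k) * (g k :: real))"
proof -
  have "(\<Sum>y\<in>Pow S. g (card y)) = (\<Sum>k\<le>card S. \<Sum>y\<in>{y. y \<in> Pow S \<and> card y = k}. g (card y))"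
    by (rule sum.group[symmetric]) (use assms in \<open>auto simp: card_mono\<close>)
  also have "\<dots> = (\<Sum>k\<le>card S. real (card S choose k) * g k)"
  proof (rule sum.cong[OF refl])
    fix k
    have e: "{y. y \<in> Pow S \<and> card y = k} = {B. B \<subseteq> S \<and> card B = k}" by auto
    have "(\<Sum>y\<in>{y. y \<in> Pow S \<and> card y = k}. g (card y)) = (\<Sum>y\<in>{B. B \<subseteq> S \<and> card B = k}. g k)"
      unfolding e by (rule sum.cong) auto
    also have "\<dots> = real (card S choose k) * g k"
      using n_subsets[OF assms, of k] by simp
    finally show "(\<Sum>y\<in>{y. y \<in> Pow S \<and> card y = k}. g (card y)) = real (card S choose k) * g k" .
  qed
  finally show ?thesis .
qed

lemma gauss_prod:
  fixes \<mu> z :: "'a::euclidean_space"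
  assumes "\<sigma> > 0"
  shows "gauss_density \<sigma> \<mu> z = (\<Prod>b\<in>Basis. normal_density (\<mu> \<bullet> b) \<sigma> (z \<bullet> b))"
proof -
  have n: "(norm (z - \<mu>))\<^sup>2 = (\<Sum>b\<in>Basis. (z \<bullet> b - \<mu> \<bullet> b)\<^sup>2)"
    unfolding power2_norm_eq_inner
    by (subst euclidean_inner) (simp add: power2_eq_square inner_diff_left)
  have s: "sqrt (2 * pi * \<sigma>\<^sup>2) = sqrt (2 * pi) * \<sigma>"
    using assms by (simp add: real_sqrt_mult)
  have "gauss_density \<sigma> \<mu> z = (\<Prod>b\<in>(Basis::'a set). 1 / (sqrt (2 * pi) * \<sigma>)) * (\<Prod>b\<in>Basis. exp (- (z \<bullet> b - \<mu> \<bullet> b)\<^sup>2 / (2 * \<sigma>\<^sup>2)))"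
    unfolding gauss_density_def n
    by (simp add: exp_sum[symmetric] sum_negf sum_divide_distrib[symmetric])
  also have "\<dots> = (\<Prod>b\<in>Basis. normal_density (\<mu> \<bullet> b) \<sigma> (z \<bullet> b))"
    unfolding prod.distrib[symmetric] normal_density_def s
    by (rule prod.cong) (auto simp: power2_commute)
  finally show ?thesis .
qed

lemma nn_integral_normal_one:
  assumes "\<sigma> > 0"
  shows "(\<integral>\<^sup>+x. ennreal (normal_density \<mu> \<sigma> x) \<partial>lborel) = 1"
  using assms by (subst nn_integral_eq_integral) (auto simp: integral_normal_density integrable_normal_density)

lemma key_integral:
  fixes b0 :: "'a::euclidean_space"
  assumes b0: "b0 \<in> Basis" and \<sigma>: "\<sigma> > 0" and L: "L2 > 0"
    and F[measurable]: "F \<in> borel_measurable borel" and Fnn: "\<And>t. 0 \<le> F t"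
  shows "(\<integral>z. (\<Prod>b\<in>Basis-{b0}. normal_density 0 \<sigma> (z \<bullet> b)) * (F ((z \<bullet> b0) / L2) / L2) \<partial>(lborel::'a measure))
       = (\<integral>t. F t \<partial>lborel)"
proof -
  define \<phi> where "\<phi> b = (if b = b0 then (\<lambda>u. F (u / L2) / L2) else normal_density 0 \<sigma>)" for b
  have eq: "(\<lambda>z::'a. (\<Prod>b\<in>Basis-{b0}. normal_density 0 \<sigma> (z \<bullet> b)) * (F ((z \<bullet> b0) / L2) / L2))
      = (\<lambda>z. \<Prod>b\<in>Basis. \<phi> b (z \<bullet> b))"
  proof (rule ext)
    fix z :: 'a
    have "(\<Prod>b\<in>Basis. \<phi> b (z \<bullet> b)) = \<phi> b0 (z \<bullet> b0) * (\<Prod>b\<in>Basis-{b0}. \<phi> b (z \<bullet> b))"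
      by (rule prod.remove[OF finite_Basis b0])
    also have "(\<Prod>b\<in>Basis-{b0}. \<phi> b (z \<bullet> b)) = (\<Prod>b\<in>Basis-{b0}. normal_density 0 \<sigma> (z \<bullet> b))"
      by (rule prod.cong) (auto simp: \<phi>_def)
    finally show "(\<Prod>b\<in>Basis-{b0}. normal_density 0 \<sigma> (z \<bullet> b)) * (F ((z \<bullet> b0) / L2) / L2) = (\<Prod>b\<in>Basis. \<phi> b (z \<bullet> b))"
      by (simp add: \<phi>_def)
  qed
  have meas: "\<phi> b \<in> borel_measurable borel" for b
    by (simp add: \<phi>_def)
  have nn: "0 \<le> \<phi> b x" for b x
    using Fnn L by (simp add: \<phi>_def)
  have measP: "(\<lambda>z::'a. \<Prod>b\<in>Basis. \<phi> b (z \<bullet> b)) \<in> borel_measurable borel"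
    by (intro borel_measurable_prod measurable_compose[OF _ meas]) simp
  have "(\<integral>z. (\<Prod>b\<in>Basis. \<phi> b (z \<bullet> b)) \<partial>(lborel::'a measure))
      = enn2real (\<integral>\<^sup>+z. ennreal (\<Prod>b\<in>Basis. \<phi> b (z \<bullet> b)) \<partial>lborel)"
    using measP nn by (intro integral_eq_nn_integral) (auto intro: prod_nonneg)
  also have "(\<integral>\<^sup>+z. ennreal (\<Prod>b\<in>Basis. \<phi> b (z \<bullet> b)) \<partial>(lborel::'a measure))
      = (\<integral>\<^sup>+z. (\<Prod>b\<in>Basis. ennreal (\<phi> b (z \<bullet> b))) \<partial>lborel)"
    using nn by (simp add: prod_ennreal)
  also have "\<dots> = (\<Prod>b\<in>(Basis::'a set). (\<integral>\<^sup>+x. ennreal (\<phi> b x) \<partial>lborel))"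
    using meas by (intro nn_integral_lborel_prod) auto
  also have "\<dots> = (\<integral>\<^sup>+x. ennreal (\<phi> b0 x) \<partial>lborel) * (\<Prod>b\<in>(Basis::'a set)-{b0}. (\<integral>\<^sup>+x. ennreal (\<phi> b x) \<partial>lborel))"
    by (rule prod.remove[OF finite_Basis b0])
  also have "(\<Prod>b\<in>(Basis::'a set)-{b0}. (\<integral>\<^sup>+x. ennreal (\<phi> b x) \<partial>lborel)) = 1"
    by (rule prod.neutral) (auto simp: \<phi>_def nn_integral_normal_one[OF \<sigma>])
  also have "(\<integral>\<^sup>+x. ennreal (\<phi> b0 x) \<partial>lborel) = (\<integral>\<^sup>+x. ennreal (F (x / L2) / L2) \<partial>lborel)"
    by (simp add: \<phi>_def)
  also have "\<dots> = ennreal \<bar>L2\<bar> * (\<integral>\<^sup>+x. ennreal (F ((0 + L2 * x) / L2) / L2) \<partial>lborel)"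
    using L by (intro nn_integral_real_affine) auto
  also have "\<dots> = ennreal L2 * (\<integral>\<^sup>+x. ennreal (1 / L2) * ennreal (F x) \<partial>lborel)"
    using L Fnn by (simp add: ennreal_mult[symmetric])
  also have "\<dots> = (\<integral>\<^sup>+x. ennreal (F x) \<partial>lborel)"
    using L by (simp add: nn_integral_cmult mult.assoc[symmetric] ennreal_mult[symmetric])
  finally have "(\<integral>z. (\<Prod>b\<in>Basis. \<phi> b (z \<bullet> b)) \<partial>(lborel::'a measure)) = enn2real (\<integral>\<^sup>+x. ennreal (F x) \<partial>lborel)"
    by simp
  also have "\<dots> = (\<integral>t. F t \<partial>lborel)"
    using Fnn by (intro integral_eq_nn_integral[symmetric]) auto
  finally show ?thesis unfolding eq .
qed


lemma gauss_axis:
  fixes b0 z :: "'a::euclidean_space"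
  assumes b0: "b0 \<in> Basis" and \<sigma>: "\<sigma> > 0"
  shows "gauss_density \<sigma> (c *\<^sub>R b0) z = (\<Prod>b\<in>Basis-{b0}. normal_density 0 \<sigma> (z \<bullet> b)) * normal_density c \<sigma> (z \<bullet> b0)"
proof -
  have "gauss_density \<sigma> (c *\<^sub>R b0) z = (\<Prod>b\<in>Basis. normal_density ((c *\<^sub>R b0) \<bullet> b) \<sigma> (z \<bullet> b))"
    by (rule gauss_prod[OF \<sigma>])
  also have "\<dots> = normal_density ((c *\<^sub>R b0) \<bullet> b0) \<sigma> (z \<bullet> b0) * (\<Prod>b\<in>Basis-{b0}. normal_density ((c *\<^sub>R b0) \<bullet> b) \<sigma> (z \<bullet> b))"
    by (rule prod.remove[OF finite_Basis b0])
  also have "(\<Prod>b\<in>Basis-{b0}. normal_density ((c *\<^sub>R b0) \<bullet> b) \<sigma> (z \<bullet> b)) = (\<Prod>b\<in>Basis-{b0}. normal_density 0 \<sigma> (z \<bullet> b))"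
    by (rule prod.cong) (use b0 in \<open>auto simp: inner_Basis\<close>)
  finally show ?thesis using b0 by (simp add: inner_Basis)
qed

lemma mixture:
  fixes b0 z :: "'a::euclidean_space"
  assumes b0: "b0 \<in> Basis" and \<sigma>: "\<sigma> > 0" and S: "finite S"
    and h: "\<And>y. y \<subseteq> S \<Longrightarrow> h y = c (card y) *\<^sub>R b0"
  shows "subsampled_gauss_density r \<sigma> h S z = (\<Prod>b\<in>Basis-{b0}. normal_density 0 \<sigma> (z \<bullet> b)) *
     (\<Sum>k\<le>card S. normal_density (c k) \<sigma> (z \<bullet> b0) * binom_prob k (card S) r)"
proof -
  define P where "P = (\<Prod>b\<in>Basis-{b0}. normal_density 0 \<sigma> (z \<bullet> b))"
  define G where "G k = P * normal_density (c k) \<sigma> (z \<bullet> b0) * (r ^ k * (1 - r) ^ (card S - k))" for k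
  have "subsampled_gauss_density r \<sigma> h S z = (\<Sum>y\<in>Pow S. G (card y))"
    unfolding subsampled_gauss_density_def
    by (rule sum.cong) (auto simp: h gauss_axis[OF b0 \<sigma>] poisson_sub_def G_def P_def)
  also have "\<dots> = (\<Sum>k\<le>card S. real (card S choose k) * G k)"
    by (rule sum_Pow_card[OF S])
  also have "\<dots> = P * (\<Sum>k\<le>card S. normal_density (c k) \<sigma> (z \<bullet> b0) * binom_prob k (card S) r)"
    by (simp add: sum_distrib_left G_def binom_prob_def algebra_simps)
  finally show ?thesis by (simp add: P_def)
qed


lemma normal_scale:
  assumes L: "L2 > 0" and \<sigma>: "\<sigma> > 0"
  shows "normal_density (L2 * \<mu>) \<sigma> u = normal_density \<mu> (\<sigma> / L2) (u / L2) / L2"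
proof -
  have e: "- (u / L2 - \<mu>)\<^sup>2 / (2 * (\<sigma> / L2)\<^sup>2) = - (u - L2 * \<mu>)\<^sup>2 / (2 * \<sigma>\<^sup>2)"
    using L \<sigma> by (simp add: field_simps power2_eq_square)
  have s: "sqrt (2 * pi * (\<sigma> / L2)\<^sup>2) = sqrt (2 * pi * \<sigma>\<^sup>2) / L2"
    using L by (simp add: real_sqrt_mult real_sqrt_divide power_divide)
  show ?thesis unfolding normal_density_def e s using L by simp
qed

lemma max_scale:
  fixes p L a b \<alpha> :: real
  assumes "p > 0" "L > 0"
  shows "max (p * (a / L) - \<alpha> * (p * (b / L))) 0 = p * (max (a - \<alpha> * b) 0 / L)"
proof (cases "a - \<alpha> * b \<ge> 0")
  case True
  have "p * (a / L) - \<alpha> * (p * (b / L)) = p * ((a - \<alpha> * b) / L)" by (simp add: right_diff_distrib diff_divide_distrib)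
  moreover have "p * ((a - \<alpha> * b) / L) \<ge> 0" using True assms by simp
  ultimately show ?thesis using True by simp
next
  case False
  have "p * (a / L) - \<alpha> * (p * (b / L)) = p * ((a - \<alpha> * b) / L)" by (simp add: right_diff_distrib diff_divide_distrib)
  moreover have "p * ((a - \<alpha> * b) / L) \<le> 0" using False assms
    by (simp add: mult_nonneg_nonpos divide_nonpos_pos)
  ultimately show ?thesis using False by simp
qed

lemma powr_scale:
  fixes p L a b \<alpha> :: real
  assumes "p > 0" "L > 0"
  shows "(p * (a / L)) powr \<alpha> * (p * (b / L)) powr (1 - \<alpha>) = p * ((a powr \<alpha> * b powr (1 - \<alpha>)) / L)"
proof -
  define q where "q = p / L"
  have q: "q > 0" using assms by (simp add: q_def)
  have "(p * (a / L)) powr \<alpha> * (p * (b / L)) powr (1 - \<alpha>) = (q * a) powr \<alpha> * (q * b) powr (1 - \<alpha>)"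
    by (simp add: q_def)
  also have "\<dots> = (q powr \<alpha> * q powr (1 - \<alpha>)) * (a powr \<alpha> * b powr (1 - \<alpha>))"
    by (simp add: powr_mult)
  also have "q powr \<alpha> * q powr (1 - \<alpha>) = q"
    using q by (simp add: powr_add[symmetric])
  finally show ?thesis by (simp add: q_def)
qed

lemma shift1: "(\<Sum>i=1..n+1. g i) = (\<Sum>k\<le>n. (g (Suc k) :: real))"
  by (induct n) auto

theorem mainTheorem9:
  fixes r \<sigma> L2 :: real and Kp Km :: nat
  assumes "0 \<le> r" "r \<le> 1" "\<sigma> > 0" "L2 > 0"
  shows "\<exists>(x :: nat set) x' (h :: nat set \<Rightarrow> 'a::euclidean_space).
     finite x \<and> finite x' \<and> group_neighbor Kp Km x x' \<and>
     (\<forall>y y'. finite y \<and> finite y' \<and> insdel_neighbor y y' \<longrightarrow> norm (h y - h y') \<le> L2) \<and>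
     (\<exists>y y'. finite y \<and> finite y' \<and> insdel_neighbor y y' \<and> norm (h y - h y') = L2) \<and>
     (let m1 = subsampled_gauss_density r \<sigma> h x;
          m2 = subsampled_gauss_density r \<sigma> h x';
          f1 = (\<lambda>t. \<Sum>i=1..Km+1. normal_density (real (i - 1)) (\<sigma> / L2) t * binom_prob (i - 1) Km r);
          f2 = (\<lambda>t. \<Sum>j=1..Kp+1. normal_density (- real (j - 1)) (\<sigma> / L2) t * binom_prob (j - 1) Kp r)
      in (\<forall>\<alpha>\<ge>0. hockey_stick lborel \<alpha> m1 m2 = hockey_stick lborel \<alpha> f1 f2) \<and>
         (\<forall>\<alpha>>1. renyi_moment lborel \<alpha> m1 m2 = renyi_moment lborel \<alpha> f1 f2))"
proof -
  note \<sigma> = \<open>\<sigma> > 0\<close> and L = \<open>L2 > 0\<close>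
  obtain b0 :: 'a where b0: "b0 \<in> Basis" using nonempty_Basis by blast
  define B :: "nat set" where "B = {Km..<Km+Kp}"
  define x :: "nat set" where "x = {..<Km}"
  define d where "d y = real (card (y - B)) - real (card (y \<inter> B))" for y
  define h where "h y = (L2 * d y) *\<^sub>R b0" for y
  define F1 where "F1 = (\<lambda>t. \<Sum>i=1..Km+1. normal_density (real (i - 1)) (\<sigma> / L2) t * binom_prob (i - 1) Km r)"
  define F2 where "F2 = (\<lambda>t. \<Sum>j=1..Kp+1. normal_density (- real (j - 1)) (\<sigma> / L2) t * binom_prob (j - 1) Kp r)"
  define P where "P z = (\<Prod>b\<in>Basis-{b0}. normal_density 0 \<sigma> (z \<bullet> b))" for z :: 'a
  have Ppos: "P z > 0" for z
    unfolding P_def by (rule prod_pos) (use \<sigma> normal_density_pos in auto)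
  have fin: "finite x" "finite B" by (auto simp: x_def B_def)
  have cx: "card x = Km" and cB: "card B = Kp" by (auto simp: x_def B_def)
  have xB: "B \<inter> x = {}" by (auto simp: x_def B_def)
  have gn: "group_neighbor Kp Km x B"
    unfolding group_neighbor_def
    by (rule exI[of _ x], rule exI[of _ B]) (use fin cx cB xB in auto)
  have nb0: "norm b0 = 1" using b0 by simp
  have hdiff: "norm (h y - h y') = L2 * \<bar>d y - d y'\<bar>" for y y'
  proof -
    have "h y - h y' = (L2 * (d y - d y')) *\<^sub>R b0"
      by (simp add: h_def scaleR_diff_left[symmetric] right_diff_distrib)
    then show ?thesis using L nb0 by (simp add: abs_mult)
  qed
  have dins: "\<bar>d (insert a y) - d y\<bar> = 1" if "finite y" "a \<notin> y" for a y
  proof (cases "a \<in> B")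
    case True
    then have "insert a y - B = y - B" "insert a y \<inter> B = insert a (y \<inter> B)" by auto
    then show ?thesis using that by (simp add: d_def)
  next
    case False
    then have "insert a y - B = insert a (y - B)" "insert a y \<inter> B = y \<inter> B" by auto
    then show ?thesis using that by (simp add: d_def)
  qed
  have sens: "\<forall>y y'. finite y \<and> finite y' \<and> insdel_neighbor y y' \<longrightarrow> norm (h y - h y') \<le> L2"
  proof (intro allI impI)
    fix y y' :: "nat set"
    assume a: "finite y \<and> finite y' \<and> insdel_neighbor y y'"
    then have "\<bar>d y - d y'\<bar> = 1"
      unfolding insdel_neighbor_def using dins by (auto simp: abs_minus_commute)
    then show "norm (h y - h y') \<le> L2" using hdiff by simp
  qed
  have ex: "\<exists>y y'. finite y \<and> finite y' \<and> insdel_neighbor y y' \<and> norm (h y - h y') = L2"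
  proof (intro exI conjI)
    show "insdel_neighbor {} {Km+Kp}" by (auto simp: insdel_neighbor_def)
    have "{Km+Kp} - B = {Km+Kp}" "{Km+Kp} \<inter> B = {}" by (auto simp: B_def)
    then have "d {} = 0" "d {Km+Kp} = 1" by (auto simp: d_def)
    then show "norm (h {} - h {Km+Kp}) = L2" using hdiff L by simp
  qed auto
  have hx: "h y = (L2 * real (card y)) *\<^sub>R b0" if "y \<subseteq> x" for y
  proof -
    have e: "y - B = y" "y \<inter> B = {}" using that xB by auto
    show ?thesis unfolding h_def d_def e by simp
  qed
  have hB: "h y = (L2 * (- real (card y))) *\<^sub>R b0" if "y \<subseteq> B" for y
  proof -
    have e: "y - B = {}" "y \<inter> B = y" using that by auto
    show ?thesis unfolding h_def d_def e by simp
  qed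
  have F1': "F1 t = (\<Sum>k\<le>Km. normal_density (real k) (\<sigma> / L2) t * binom_prob k Km r)" for t
    unfolding F1_def shift1 by simp
  have F2': "F2 t = (\<Sum>k\<le>Kp. normal_density (- real k) (\<sigma> / L2) t * binom_prob k Kp r)" for t
    unfolding F2_def shift1 by simp
  have m1: "subsampled_gauss_density r \<sigma> h x z = P z * (F1 ((z \<bullet> b0) / L2) / L2)" for z
    using mixture[OF b0 \<sigma> fin(1), of h "\<lambda>k. L2 * real k" r z] hx
    by (simp add: cx P_def F1' normal_scale[OF L \<sigma>] sum_divide_distrib)
  have m2: "subsampled_gauss_density r \<sigma> h B z = P z * (F2 ((z \<bullet> b0) / L2) / L2)" for z
  proof -
    have ns2: "normal_density (- (L2 * real k)) \<sigma> u = normal_density (- real k) (\<sigma> / L2) (u / L2) / L2" for k u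
      using normal_scale[OF L \<sigma>, of "- real k" u] by simp
    show ?thesis using mixture[OF b0 \<sigma> fin(2), of h "\<lambda>k. L2 * (- real k)" r z] hB
      by (simp add: cB P_def F2' ns2 sum_divide_distrib)
  qed
  have hs: "hockey_stick lborel \<alpha> (subsampled_gauss_density r \<sigma> h x) (subsampled_gauss_density r \<sigma> h B)
      = hockey_stick lborel \<alpha> F1 F2" for \<alpha>
  proof -
    have "hockey_stick lborel \<alpha> (subsampled_gauss_density r \<sigma> h x) (subsampled_gauss_density r \<sigma> h B)
       = (\<integral>z. P z * (max (F1 ((z \<bullet> b0) / L2) - \<alpha> * F2 ((z \<bullet> b0) / L2)) 0 / L2) \<partial>(lborel::'a measure))"
      unfolding hockey_stick_def m1 m2 by (rule Bochner_Integration.integral_cong[OF refl]) (rule max_scale[OF Ppos L])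
    also have "\<dots> = (\<integral>t. max (F1 t - \<alpha> * F2 t) 0 \<partial>lborel)"
      unfolding P_def by (rule key_integral[OF b0 \<sigma> L]) (auto simp: F1_def F2_def)
    finally show ?thesis by (simp add: hockey_stick_def)
  qed
  have rm: "renyi_moment lborel \<alpha> (subsampled_gauss_density r \<sigma> h x) (subsampled_gauss_density r \<sigma> h B)
      = renyi_moment lborel \<alpha> F1 F2" for \<alpha>
  proof -
    have "renyi_moment lborel \<alpha> (subsampled_gauss_density r \<sigma> h x) (subsampled_gauss_density r \<sigma> h B)
       = (\<integral>z. P z * ((F1 ((z \<bullet> b0) / L2) powr \<alpha> * F2 ((z \<bullet> b0) / L2) powr (1 - \<alpha>)) / L2) \<partial>(lborel::'a measure))"
      unfolding renyi_moment_def m1 m2 by (rule Bochner_Integration.integral_cong[OF refl]) (rule powr_scale[OF Ppos L])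
    also have "\<dots> = (\<integral>t. F1 t powr \<alpha> * F2 t powr (1 - \<alpha>) \<partial>lborel)"
      unfolding P_def by (rule key_integral[OF b0 \<sigma> L]) (auto simp: F1_def F2_def)
    finally show ?thesis by (simp add: renyi_moment_def)
  qed
  show ?thesis
    apply (rule exI[of _ x], rule exI[of _ B], rule exI[of _ h])
    using fin gn sens ex hs rm unfolding F1_def F2_def Let_def by blast
qed

end
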